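(* Let $H$ be the graph consisting of two triangles $uv_1v_2$ and $uw_1w_2$ sharing exactly the vertex $u$. Let $G$ be a graph with $n$ vertices obtained from $H$ by attaching $k\ge1$ pendant edges (new leaves) to vertices of $H$, none of them to $u$, such that the pendant edges are attached to exactly $d$ of the vertices $v_1,v_2,w_1,w_2$, where $1\le d\le 4$. If $d\ge 2$, then $\operatorname{avm}(G)>\operatorname{avm}(R_n(3,3))$.
   Context: $\operatorname{avm}(G)$ is the average of $|M|$ over all maximal matchings $M$ of $G$ (a matching is maximal if not properly contained in another matching). For $n\ge 6$, $R_n(3,3)$ is the graph obtained from $H$ by attaching $n-5$ pendant edges (new leaves) to $v_1$. *)

theory Defs
  imports Complex_Main
begin

text \<open>Simple graphs are given by their edge sets (2-element vertex sets).\<close>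

definition matching :: "'a set set \<Rightarrow> 'a set set \<Rightarrow> bool" where
  "matching E M \<longleftrightarrow> M \<subseteq> E \<and> (\<forall>e\<in>M. \<forall>f\<in>M. e \<noteq> f \<longrightarrow> e \<inter> f = {})"

definition maximal_matching :: "'a set set \<Rightarrow> 'a set set \<Rightarrow> bool" where
  "maximal_matching E M \<longleftrightarrow> matching E M \<and> \<not> (\<exists>M'. matching E M' \<and> M \<subset> M')"

definition avm :: "'a set set \<Rightarrow> real" where
  "avm E = (\<Sum>M\<in>{M. maximal_matching E M}. real (card M)) / real (card {M. maximal_matching E M})"

text \<open>Vertices are pairs: (0,0) = u, (1,0) = v1, (2,0) = v2, (3,0) = w1, (4,0) = w2;
  (i,j) with j \<ge> 1 is the j-th pendant leaf attached to (i,0).\<close>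

definition H_edges :: "(nat \<times> nat) set set" where
  "H_edges = {{(0,0),(1,0)}, {(0,0),(2,0)}, {(1,0),(2,0)},
              {(0,0),(3,0)}, {(0,0),(4,0)}, {(3,0),(4,0)}}"

definition pendant_graph :: "(nat \<Rightarrow> nat) \<Rightarrow> (nat \<times> nat) set set" where
  "pendant_graph c = H_edges \<union> {{(i,0),(i,j)} | i j. i \<in> {1..4} \<and> 1 \<le> j \<and> j \<le> c i}"

definition R33 :: "nat \<Rightarrow> (nat \<times> nat) set set" where
  "R33 n = pendant_graph (\<lambda>i. if i = 1 then n - 5 else 0)"

end

theory Submission
  imports Defs "HOL-Library.FuncSet"
begin


definition rest :: "(nat \<Rightarrow> nat) \<Rightarrow> (nat\<times>nat) set set \<Rightarrow> nat set" where
  "rest c m = {i\<in>{1..4}. 0 < c i \<and> (i,0) \<notin> \<Union>m}"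

definition validH :: "(nat \<Rightarrow> nat) \<Rightarrow> (nat\<times>nat) set set \<Rightarrow> bool" where
  "validH c m \<longleftrightarrow> matching H_edges m \<and>
     (\<forall>e\<in>H_edges. \<exists>x\<in>e. x \<in> \<Union>m \<or> (fst x \<in> {1..4} \<and> snd x = 0 \<and> 0 < c (fst x)))"

definition leafE :: "nat \<Rightarrow> nat \<Rightarrow> (nat\<times>nat) set" where
  "leafE i j = {(i,0),(i,j)}"

definition build :: "(nat \<Rightarrow> nat) \<Rightarrow> (nat\<times>nat) set set \<Rightarrow> (nat \<Rightarrow> nat) \<Rightarrow> (nat\<times>nat) set set" where
  "build c m f = m \<union> (\<lambda>i. leafE i (f i)) ` rest c m"

definition DD :: "(nat \<Rightarrow> nat) \<Rightarrow> ((nat\<times>nat) set set \<times> (nat \<Rightarrow> nat)) set" where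
  "DD c = (SIGMA m:{m. validH c m}. PiE (rest c m) (\<lambda>i. {1..c i}))"

lemma pg_mem: "e \<in> pendant_graph c \<longleftrightarrow> e \<in> H_edges \<or> (\<exists>i j. e = leafE i j \<and> i \<in> {1..4} \<and> 1 \<le> j \<and> j \<le> c i)"
  by (auto simp: pendant_graph_def leafE_def)

lemma H_snd: "e \<in> H_edges \<Longrightarrow> x \<in> e \<Longrightarrow> snd x = 0"
  by (auto simp: H_edges_def)

lemma H_ne: "e \<in> H_edges \<Longrightarrow> e \<noteq> {}"
  by (auto simp: H_edges_def)

lemma finite_H: "finite H_edges"
  by (simp add: H_edges_def)

lemma leaf_fst: "x \<in> leafE i j \<Longrightarrow> fst x = i"
  by (auto simp: leafE_def)

lemma leaf_notH: "1 \<le> j \<Longrightarrow> leafE i j \<notin> H_edges"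
proof
  assume "1 \<le> j" "leafE i j \<in> H_edges"
  moreover have "(i,j) \<in> leafE i j" by (simp add: leafE_def)
  ultimately show False using H_snd by fastforce
qed

lemma leaf_inj: "leafE i j = leafE i' j' \<Longrightarrow> 1 \<le> j \<Longrightarrow> i = i' \<and> j = j'"
  by (auto simp: leafE_def doubleton_eq_iff)

lemma leaf_inter: "leafE i j \<inter> leafE i' j' \<noteq> {} \<Longrightarrow> i = i'"
  using leaf_fst by blast

lemma pg_ne: "e \<in> pendant_graph c \<Longrightarrow> e \<noteq> {}"
  unfolding pg_mem leafE_def using H_ne by blast

lemma maximal_iff:
  assumes "\<And>e. e \<in> E \<Longrightarrow> e \<noteq> {}"
  shows "maximal_matching E M \<longleftrightarrow> matching E M \<and> (\<forall>e\<in>E. \<exists>x\<in>e. x \<in> \<Union>M)"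
proof
  assume mm: "maximal_matching E M"
  then have m: "matching E M" by (simp add: maximal_matching_def)
  have "\<exists>x\<in>e. x \<in> \<Union>M" if e: "e \<in> E" for e
  proof (rule ccontr)
    assume nc: "\<not> (\<exists>x\<in>e. x \<in> \<Union>M)"
    have "e \<notin> M" using nc assms[OF e] by blast
    moreover have "matching E (insert e M)"
      using m e nc unfolding matching_def by blast
    ultimately show False using mm unfolding maximal_matching_def by blast
  qed
  then show "matching E M \<and> (\<forall>e\<in>E. \<exists>x\<in>e. x \<in> \<Union>M)" using m by blast
next
  assume h: "matching E M \<and> (\<forall>e\<in>E. \<exists>x\<in>e. x \<in> \<Union>M)"
  show "maximal_matching E M"
    unfolding maximal_matching_def
  proof (intro conjI notI)
    show "matching E M" using h by blast
    assume "\<exists>M'. matching E M' \<and> M \<subset> M'"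
    then obtain M' where M': "matching E M'" "M \<subset> M'" by blast
    then obtain e where e: "e \<in> M'" "e \<notin> M" by blast
    then have "e \<in> E" using M' unfolding matching_def by blast
    then obtain x g where "x \<in> e" "g \<in> M" "x \<in> g" using h by blast
    moreover have "g \<in> M'" "g \<noteq> e" using \<open>g \<in> M\<close> e M' by auto
    ultimately show False using M' e unfolding matching_def by blast
  qed
qed


lemma validH_sub: "validH c m \<Longrightarrow> m \<subseteq> H_edges"
  by (simp add: validH_def matching_def)

lemma H_sub_pg: "H_edges \<subseteq> pendant_graph c"
  by (simp add: pendant_graph_def)

lemma build_max:
  assumes v: "validH c m" and f: "f \<in> PiE (rest c m) (\<lambda>i. {1..c i})"
  shows "maximal_matching (pendant_graph c) (build c m f)"
proof -
  define M where "M = build c m f"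
  have mH: "m \<subseteq> H_edges" using v by (simp add: validH_sub)
  have mm: "matching H_edges m" using v by (simp add: validH_def)
  have fr: "\<And>i. i \<in> rest c m \<Longrightarrow> 1 \<le> f i \<and> f i \<le> c i" using f by auto
  have cov: "(i,0) \<in> \<Union>M" if "i \<in> {1..4}" "0 < c i" for i
  proof (cases "(i,0) \<in> \<Union>m")
    case True then show ?thesis by (auto simp: M_def build_def)
  next
    case False
    then have "i \<in> rest c m" using that by (simp add: rest_def)
    then have "leafE i (f i) \<in> M" by (simp add: M_def build_def)
    then show ?thesis by (auto simp: leafE_def)
  qed
  have sub: "M \<subseteq> pendant_graph c"
  proof
    fix g assume "g \<in> M"
    then consider "g \<in> m" | i where "i \<in> rest c m" "g = leafE i (f i)" by (auto simp: M_def build_def)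
    then show "g \<in> pendant_graph c"
    proof cases
      case 1 then show ?thesis using mH H_sub_pg by blast
    next
      case 2 then show ?thesis using fr[OF 2(1)] by (auto simp: pg_mem rest_def)
    qed
  qed
  have disj: "g \<inter> h = {}" if g: "g \<in> M" and h: "h \<in> M" and gh: "g \<noteq> h" for g h
  proof -
    have mix: "g' \<inter> leafE i (f i) = {}" if "g' \<in> m" "i \<in> rest c m" for g' i
    proof (rule ccontr)
      assume "g' \<inter> leafE i (f i) \<noteq> {}"
      then obtain x where x: "x \<in> g'" "x \<in> leafE i (f i)" by blast
      then have "snd x = 0" using H_snd mH that(1) by blast
      moreover have "fst x = i" using x leaf_fst by blast
      ultimately have "(i,0) \<in> \<Union>m" using x that(1) by (metis UnionI prod.collapse)
      then show False using that(2) by (simp add: rest_def)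
    qed
    from g consider "g \<in> m" | i where "i \<in> rest c m" "g = leafE i (f i)" by (auto simp: M_def build_def)
    then show ?thesis
    proof cases
      case 1
      from h consider "h \<in> m" | i where "i \<in> rest c m" "h = leafE i (f i)" by (auto simp: M_def build_def)
      then show ?thesis
      proof cases
        case 1 then show ?thesis using \<open>g \<in> m\<close> mm gh by (simp add: matching_def)
      next
        case 2 then show ?thesis using mix \<open>g \<in> m\<close> by blast
      qed
    next
      case 2
      from h consider "h \<in> m" | i where "i \<in> rest c m" "h = leafE i (f i)" by (auto simp: M_def build_def)
      then show ?thesis
      proof cases
        case 1 then show ?thesis using mix 2 by blast
      next
        case h2: 2 then show ?thesis using 2 gh leaf_inter by blast
      qed
    qed
  qed
  have match: "matching (pendant_graph c) M" using sub disj by (simp add: matching_def)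
  have "\<exists>x\<in>e. x \<in> \<Union>M" if e: "e \<in> pendant_graph c" for e
  proof -
    from e consider "e \<in> H_edges" | i j where "e = leafE i j" "i \<in> {1..4}" "1 \<le> j" "j \<le> c i"
      by (auto simp: pg_mem)
    then show ?thesis
    proof cases
      case 1
      then obtain x where x: "x \<in> e" "x \<in> \<Union>m \<or> (fst x \<in> {1..4} \<and> snd x = 0 \<and> 0 < c (fst x))"
        using v 1 unfolding validH_def by blast
      have "x \<in> \<Union>M"
        using x(2)
      proof
        assume "x \<in> \<Union>m" then show ?thesis by (auto simp: M_def build_def)
      next
        assume "fst x \<in> {1..4} \<and> snd x = 0 \<and> 0 < c (fst x)"
        then show ?thesis using cov[of "fst x"] by (metis prod.collapse)
      qed
      then show ?thesis using x(1) by blast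
    next
      case 2
      then have "(i,0) \<in> e" by (simp add: leafE_def)
      moreover have "(i,0) \<in> \<Union>M" using cov 2 by auto
      ultimately show ?thesis by blast
    qed
  qed
  then have cv: "\<forall>e\<in>pendant_graph c. \<exists>x\<in>e. x \<in> \<Union>M" by blast
  have "maximal_matching (pendant_graph c) M \<longleftrightarrow> matching (pendant_graph c) M \<and> (\<forall>e\<in>pendant_graph c. \<exists>x\<in>e. x \<in> \<Union>M)"
    by (rule maximal_iff) (rule pg_ne)
  then show ?thesis using match cv by (simp add: M_def)
qed


lemma max_build:
  assumes mx: "maximal_matching (pendant_graph c) M"
  shows "\<exists>m f. (m,f) \<in> DD c \<and> M = build c m f"
proof -
  have "maximal_matching (pendant_graph c) M \<longleftrightarrow> matching (pendant_graph c) M \<and> (\<forall>e\<in>pendant_graph c. \<exists>x\<in>e. x \<in> \<Union>M)"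
    by (rule maximal_iff) (rule pg_ne)
  then have mt: "matching (pendant_graph c) M" and cv: "\<forall>e\<in>pendant_graph c. \<exists>x\<in>e. x \<in> \<Union>M"
    using mx by blast+
  define m where "m = M \<inter> H_edges"
  have Msub: "M \<subseteq> pendant_graph c" using mt by (simp add: matching_def)
  have dj: "\<And>g h. g \<in> M \<Longrightarrow> h \<in> M \<Longrightarrow> g \<noteq> h \<Longrightarrow> g \<inter> h = {}"
    using mt by (simp add: matching_def)
  have leafM: "\<exists>i j. g = leafE i j \<and> i \<in> {1..4} \<and> 1 \<le> j \<and> j \<le> c i" if "g \<in> M" "g \<notin> H_edges" for g
    using Msub that pg_mem by blast
  have vm: "validH c m"
    unfolding validH_def
  proof (intro conjI ballI)
    show "matching H_edges m" using dj by (auto simp: matching_def m_def)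
    fix e assume e: "e \<in> H_edges"
    then have "e \<in> pendant_graph c" using H_sub_pg by blast
    then obtain x g where x: "x \<in> e" "g \<in> M" "x \<in> g" using cv by blast
    show "\<exists>x\<in>e. x \<in> \<Union>m \<or> (fst x \<in> {1..4} \<and> snd x = 0 \<and> 0 < c (fst x))"
    proof (cases "g \<in> H_edges")
      case True
      then have "x \<in> \<Union>m" using x by (auto simp: m_def)
      then show ?thesis using x by blast
    next
      case False
      then obtain i j where g: "g = leafE i j" "i \<in> {1..4}" "1 \<le> j" "j \<le> c i" using leafM x by blast
      have "fst x = i" using g x leaf_fst by blast
      moreover have "snd x = 0" using H_snd e x by blast
      ultimately show ?thesis using g x by auto
    qed
  qed
  have ex: "\<exists>j. 1 \<le> j \<and> j \<le> c i \<and> leafE i j \<in> M" if i: "i \<in> rest c m" for i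
  proof -
    have i1: "i \<in> {1..4}" "0 < c i" "(i,0) \<notin> \<Union>m" using i by (auto simp: rest_def)
    then have "leafE i 1 \<in> pendant_graph c" unfolding pg_mem by (intro disjI2 exI[of _ i] exI[of _ 1]) auto
    then obtain x g where x: "x \<in> leafE i 1" "g \<in> M" "x \<in> g" using cv by blast
    have fx: "fst x = i" using x leaf_fst by blast
    show ?thesis
    proof (cases "g \<in> H_edges")
      case True
      then have "snd x = 0" using H_snd x by blast
      then have "x = (i,0)" using fx by (metis prod.collapse)
      moreover have "g \<in> m" using True x by (simp add: m_def)
      ultimately show ?thesis using x i1(3) by blast
    next
      case False
      then obtain i' j where g: "g = leafE i' j" "i' \<in> {1..4}" "1 \<le> j" "j \<le> c i'" using leafM x by blast
      have "i' = i" using g x fx leaf_fst by blast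
      then show ?thesis using g x by blast
    qed
  qed
  have uq: "j = j'" if "leafE i j \<in> M" "leafE i j' \<in> M" "1 \<le> j" for i j j'
  proof -
    have "(i,0) \<in> leafE i j \<inter> leafE i j'" by (simp add: leafE_def)
    then have "leafE i j = leafE i j'" using dj that by blast
    then show ?thesis using leaf_inj that(3) by blast
  qed
  define f where "f = restrict (\<lambda>i. SOME j. 1 \<le> j \<and> j \<le> c i \<and> leafE i j \<in> M) (rest c m)"
  have fp: "1 \<le> f i \<and> f i \<le> c i \<and> leafE i (f i) \<in> M" if "i \<in> rest c m" for i
    using someI_ex[OF ex[OF that]] that by (simp add: f_def)
  have fPi: "f \<in> PiE (rest c m) (\<lambda>i. {1..c i})"
    using fp by (auto simp: f_def)
  have "M = build c m f"
  proof
    show "build c m f \<subseteq> M" using fp by (auto simp: build_def m_def)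
    show "M \<subseteq> build c m f"
    proof
      fix g assume g: "g \<in> M"
      show "g \<in> build c m f"
      proof (cases "g \<in> H_edges")
        case True then show ?thesis using g by (simp add: build_def m_def)
      next
        case False
        then obtain i j where gl: "g = leafE i j" "i \<in> {1..4}" "1 \<le> j" "j \<le> c i" using leafM g by blast
        have "(i,0) \<notin> \<Union>m"
        proof
          assume "(i,0) \<in> \<Union>m"
          then obtain h where h: "h \<in> m" "(i,0) \<in> h" by blast
          have "h \<noteq> g" using h False by (auto simp: m_def)
          moreover have "(i,0) \<in> g" using gl by (simp add: leafE_def)
          ultimately show False using dj[of h g] h g by (auto simp: m_def)
        qed
        then have ir: "i \<in> rest c m" using gl by (auto simp: rest_def)
        then have "f i = j" using uq[of i j "f i"] fp[OF ir] gl g by auto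
        then show ?thesis using ir gl by (auto simp: build_def)
      qed
    qed
  qed
  then show ?thesis using vm fPi by (auto simp: DD_def)
qed


lemma build_inter_H:
  assumes "validH c m" "f \<in> PiE (rest c m) (\<lambda>i. {1..c i})"
  shows "build c m f \<inter> H_edges = m"
proof -
  have "leafE i (f i) \<notin> H_edges" if "i \<in> rest c m" for i
    using assms(2) that leaf_notH by force
  then show ?thesis using validH_sub[OF assms(1)] by (auto simp: build_def)
qed

lemma build_inj: "inj_on (\<lambda>(m,f). build c m f) (DD c)"
proof (rule inj_onI, clarify)
  fix m f m' f'
  assume a: "(m,f) \<in> DD c" "(m',f') \<in> DD c" "build c m f = build c m' f'"
  have v: "validH c m" "validH c m'" and p: "f \<in> PiE (rest c m) (\<lambda>i. {1..c i})" "f' \<in> PiE (rest c m') (\<lambda>i. {1..c i})"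
    using a by (auto simp: DD_def)
  have mm: "m = m'" using build_inter_H[OF v(1) p(1)] build_inter_H[OF v(2) p(2)] a(3) by simp
  have "f i = f' i" if i: "i \<in> rest c m" for i
  proof -
    have f1: "1 \<le> f i" using p(1) i by auto
    have "leafE i (f i) \<in> build c m' f'" using a(3) i by (auto simp: build_def)
    moreover have "leafE i (f i) \<notin> m'" using leaf_notH[OF f1] validH_sub[OF v(2)] by blast
    ultimately obtain i' where i': "i' \<in> rest c m'" "leafE i (f i) = leafE i' (f' i')"
      by (auto simp: build_def)
    from leaf_inj[OF i'(2) f1] have "i = i'" "f i = f' i'" by auto
    then show ?thesis by simp
  qed
  then show "m = m' \<and> f = f'" using mm p PiE_ext by metis
qed

lemma finite_valid: "finite {m. validH c m}"
  by (rule finite_subset[of _ "Pow H_edges"]) (auto simp: finite_H dest: validH_sub)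

lemma finite_rest: "finite (rest c m)"
  by (simp add: rest_def)

lemma card_build:
  assumes "validH c m" "f \<in> PiE (rest c m) (\<lambda>i. {1..c i})"
  shows "card (build c m f) = card m + card (rest c m)"
proof -
  have fm: "finite m" using validH_sub[OF assms(1)] finite_H finite_subset by blast
  have "\<forall>i\<in>rest c m. leafE i (f i) \<notin> m"
  proof
    fix i assume "i \<in> rest c m"
    then have "1 \<le> f i" using assms(2) by auto
    then show "leafE i (f i) \<notin> m" using leaf_notH validH_sub[OF assms(1)] by blast
  qed
  then have d: "m \<inter> (\<lambda>i. leafE i (f i)) ` rest c m = {}" by blast
  have inj: "inj_on (\<lambda>i. leafE i (f i)) (rest c m)"
    by (intro inj_onI) (metis insertI1 leafE_def leaf_fst fst_conv)
  show ?thesis unfolding build_def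
    by (simp add: card_Un_disjoint[OF fm _ d] finite_rest card_image[OF inj])
qed

lemma max_set: "{M. maximal_matching (pendant_graph c) M} = (\<lambda>(m,f). build c m f) ` DD c"
  using max_build build_max by (fastforce simp: DD_def)

lemma finite_DD: "finite (DD c)"
  unfolding DD_def by (rule finite_SigmaI[OF finite_valid]) (simp add: finite_PiE finite_rest)

lemma count_N: "card {M. maximal_matching (pendant_graph c) M} = (\<Sum>m\<in>{m. validH c m}. \<Prod>i\<in>rest c m. c i)"
proof -
  have "card {M. maximal_matching (pendant_graph c) M} = card (DD c)"
    unfolding max_set by (rule card_image[OF build_inj])
  also have "\<dots> = (\<Sum>m\<in>{m. validH c m}. card (PiE (rest c m) (\<lambda>i. {1..c i})))"
    unfolding DD_def by (rule card_SigmaI) (auto simp: finite_valid finite_PiE finite_rest)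
  also have "\<dots> = (\<Sum>m\<in>{m. validH c m}. \<Prod>i\<in>rest c m. c i)"
    by (simp add: card_PiE finite_rest)
  finally show ?thesis .
qed

lemma count_S: "(\<Sum>M\<in>{M. maximal_matching (pendant_graph c) M}. card M) =
   (\<Sum>m\<in>{m. validH c m}. (\<Prod>i\<in>rest c m. c i) * (card m + card (rest c m)))"
proof -
  have "(\<Sum>M\<in>{M. maximal_matching (pendant_graph c) M}. card M) = (\<Sum>p\<in>DD c. card ((\<lambda>(m,f). build c m f) p))"
    unfolding max_set by (subst sum.reindex[OF build_inj]) (simp add: o_def)
  also have "\<dots> = (\<Sum>m\<in>{m. validH c m}. \<Sum>f\<in>PiE (rest c m) (\<lambda>i. {1..c i}). card (build c m f))"
    unfolding DD_def by (subst sum.Sigma) (auto simp: finite_valid finite_PiE finite_rest split_def)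
  also have "\<dots> = (\<Sum>m\<in>{m. validH c m}. \<Sum>f\<in>PiE (rest c m) (\<lambda>i. {1..c i}). card m + card (rest c m))"
    by (intro sum.cong refl) (simp add: card_build)
  also have "\<dots> = (\<Sum>m\<in>{m. validH c m}. (\<Prod>i\<in>rest c m. c i) * (card m + card (rest c m)))"
    by (simp add: card_PiE finite_rest)
  finally show ?thesis .
qed



lemma sum_Pow_insert:
  assumes "finite A" "x \<notin> A"
  shows "(\<Sum>X\<in>Pow (insert x A). g X) = (\<Sum>X\<in>Pow A. g X) + (\<Sum>X\<in>Pow A. g (insert x X))"
proof -
  have d: "Pow A \<inter> insert x ` Pow A = {}" using assms by auto
  have i: "inj_on (insert x) (Pow A)" using assms unfolding inj_on_def by (auto simp: insert_ident)
  show ?thesis unfolding Pow_insert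
    by (subst sum.union_disjoint) (use assms d i in \<open>auto simp: sum.reindex\<close>)
qed

definition NN :: "(nat \<Rightarrow> nat) \<Rightarrow> nat" where
 "NN c = (\<Sum>m\<in>Pow H_edges. if validH c m then (\<Prod>i\<in>{1,2,3,4}. if 0 < c i \<and> (i,0) \<notin> \<Union>m then c i else 1) else 0)"

definition SS :: "(nat \<Rightarrow> nat) \<Rightarrow> nat" where
 "SS c = (\<Sum>m\<in>Pow H_edges. if validH c m then (\<Prod>i\<in>{1,2,3,4}. if 0 < c i \<and> (i,0) \<notin> \<Union>m then c i else 1)
     * (card m + (\<Sum>i\<in>{1,2,3,4}. if 0 < c i \<and> (i,0) \<notin> \<Union>m then 1 else 0)) else 0)"

lemma four: "{1..4::nat} = {1,2,3,4}" by auto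

lemma rest_alt: "rest c m = {i\<in>{1,2,3,4}. 0 < c i \<and> (i,0) \<notin> \<Union>m}"
  by (simp only: rest_def four)

lemma prod_rest: "(\<Prod>i\<in>rest c m. c i) = (\<Prod>i\<in>{1,2,3,4}. if 0 < c i \<and> (i,0) \<notin> \<Union>m then c i else 1)"
  unfolding rest_alt by (rule prod.inter_filter) simp

lemma card_rest: "card (rest c m) = (\<Sum>i\<in>{1,2,3,4}. if 0 < c i \<and> (i,0) \<notin> \<Union>m then 1 else 0)"
  unfolding rest_alt card_eq_sum by (subst sum.inter_filter) simp_all

lemma valid_set: "{m. validH c m} = {m\<in>Pow H_edges. validH c m}"
  using validH_sub by auto

lemma N_eq: "card {M. maximal_matching (pendant_graph c) M} = NN c"
  unfolding count_N NN_def valid_set prod_rest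
  by (rule sum.inter_filter) (simp add: finite_H)

lemma S_eq: "(\<Sum>M\<in>{M. maximal_matching (pendant_graph c) M}. card M) = SS c"
  unfolding count_S SS_def valid_set prod_rest card_rest
  by (rule sum.inter_filter) (simp add: finite_H)

lemma avm_eq: "avm (pendant_graph c) = real (SS c) / real (NN c)"
  unfolding avm_def N_eq[symmetric] S_eq[symmetric] by simp

lemma card_pos: "card {i\<in>{1..4::nat}. 0 < c i} = (if 0<c 1 then 1 else 0) + (if 0<c 2 then 1 else 0) + (if 0<c 3 then 1 else 0) + (if 0<c 4 then 1 else 0)"
  unfolding four card_eq_sum by (subst sum.inter_filter) simp_all

lemma ineqG:
  assumes "2 \<le> card {i\<in>{1..4::nat}. 0 < c i}"
  shows "0 < NN c \<and> 7 * NN c < 3 * SS c"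
  using assms unfolding card_pos NN_def SS_def H_edges_def
  apply (simp add: sum_Pow_insert validH_def matching_def H_edges_def doubleton_eq_iff)
  apply (cases "c 1"; cases "c 2"; cases "c 3"; cases "c 4")
  apply (simp_all add: algebra_simps)
  done

lemma ineqR:
  assumes "c 1 = k" "c 2 = 0" "c 3 = 0" "c 4 = 0"
  shows "0 < NN c \<and> 3 * SS c < 7 * NN c"
  using assms unfolding NN_def SS_def H_edges_def
  by (cases k) (simp_all add: sum_Pow_insert validH_def matching_def H_edges_def doubleton_eq_iff algebra_simps)


theorem lemma3p5:
  fixes c :: "nat \<Rightarrow> nat" and n k d :: nat
  assumes "k = (\<Sum>i\<in>{1..4}. c i)" and "k \<ge> 1"
    and "n = card (\<Union> (pendant_graph c))"
    and "d = card {i\<in>{1..4::nat}. c i > 0}" and "1 \<le> d" and "d \<le> 4"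
    and "d \<ge> 2"
  shows "avm (pendant_graph c) > avm (R33 n)"
proof -
  have g: "0 < NN c \<and> 7 * NN c < 3 * SS c" using ineqG assms(4,7) by simp
  define c' where "c' = (\<lambda>i::nat. if i = 1 then n - 5 else 0)"
  have r: "0 < NN c' \<and> 3 * SS c' < 7 * NN c'" by (rule ineqR) (simp_all add: c'_def)
  have eR: "avm (R33 n) = real (SS c') / real (NN c')" by (simp add: R33_def c'_def avm_eq)
  have g': "7 * real (NN c) < 3 * real (SS c)" "0 < real (NN c)" using g by linarith+
  have r': "3 * real (SS c') < 7 * real (NN c')" "0 < real (NN c')" using r by linarith+
  have "real (SS c') / real (NN c') < 7 / 3" using r' by (simp add: field_simps)
  also have "7 / 3 < real (SS c) / real (NN c)" using g' by (simp add: field_simps)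
  finally show ?thesis by (simp add: eR avm_eq)
qed

end
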